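(* There exists $N$ such that the following holds for all $n\ge N$. Let $G$ be a graph with vertex set $\{v_1,\dots,v_n\}$, let $0\le k\le\frac1{20}\sqrt n$, write $G_i=G-v_i$ and $s_t=\sum_{i=1}^{n-k}d_t(G_i)$, and $d_t=d_t(G)$. Let $t$ be an integer with $0\le t\le\frac{2n}{3}-1$ and suppose $d_{t+1}\le\sqrt n$. Define $d_t'=\frac{1}{n-1-t}\bigl(s_t-(t+1)d_{t+1}\bigr)$. Then $d_t\ge d_t'$; moreover, if $d_t\le2\sqrt n$ then $d_t-d_t'<\frac12$ (so $d_t$ is the integer nearest to $d_t'$), and if $d_t>2\sqrt n$ then $d_t'\ge\frac12 d_t>\sqrt n$.
   Context: All graphs are finite, simple and undirected. For a graph $G'$ and integer $t$, $d_t(G')$ is the number of vertices of degree $t$ in $G'$. For $v\in V(G)$, $G-v$ is obtained by deleting $v$ and its incident edges. *)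

theory Defs
  imports Complex_Main
begin

text \<open>A finite simple graph on vertex set V is given by an edge relation E that is
  symmetric and irreflexive on V; only edges inside V are taken into account.\<close>

definition simple_graph_on :: "nat set \<Rightarrow> (nat \<Rightarrow> nat \<Rightarrow> bool) \<Rightarrow> bool" where
  "simple_graph_on V E \<longleftrightarrow> (\<forall>u\<in>V. \<forall>w\<in>V. E u w \<longleftrightarrow> E w u) \<and> (\<forall>u\<in>V. \<not> E u u)"

definition deg :: "nat set \<Rightarrow> (nat \<Rightarrow> nat \<Rightarrow> bool) \<Rightarrow> nat \<Rightarrow> nat" where
  "deg V E v = card {w \<in> V. E v w}"

definition dcount :: "nat set \<Rightarrow> (nat \<Rightarrow> nat \<Rightarrow> bool) \<Rightarrow> nat \<Rightarrow> nat" where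
  "dcount V E t = card {v \<in> V. deg V E v = t}"

definition delete_vertex :: "nat set \<Rightarrow> nat \<Rightarrow> nat set" where
  "delete_vertex V v = V - {v}"

end

theory Submission imports Defs begin

lemma card_filter_sum: "finite A \<Longrightarrow> card {x\<in>A. P x} = (\<Sum>x\<in>A. if P x then 1 else (0::nat))"
  by (simp add: sum.inter_filter[symmetric])

lemma dcount_del:
  assumes "finite V" "i \<in> V"
  shows "dcount (delete_vertex V i) E t =
     card {v\<in>V-{i}. (deg V E v = t \<and> \<not> E v i) \<or> (deg V E v = Suc t \<and> E v i)}"
proof -
  have key: "(deg (V-{i}) E v = t) = ((deg V E v = t \<and> \<not> E v i) \<or> (deg V E v = Suc t \<and> E v i))"
    if v: "v \<in> V - {i}" for v
  proof -
    have eq: "{w \<in> V-{i}. E v w} = {w\<in>V. E v w} - {i}" by blast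
    have d1: "deg (V-{i}) E v = card ({w\<in>V. E v w} - {i})" by (simp only: deg_def eq)
    have d2: "deg V E v = card {w\<in>V. E v w}" by (simp only: deg_def)
    have fin: "finite {w\<in>V. E v w}" using assms by simp
    show ?thesis
    proof (cases "E v i")
      case True
      have iin: "i \<in> {w\<in>V. E v w}" using True assms by simp
      have c1: "card ({w\<in>V. E v w} - {i}) = card {w\<in>V. E v w} - 1"
        by (rule card_Diff_singleton[OF iin])
      have "card {w\<in>V. E v w} \<noteq> 0" using iin fin by (simp only: card_0_eq) blast
      thus ?thesis using True d1 d2 c1 by linarith
    next
      case False
      hence "{w\<in>V. E v w} - {i} = {w\<in>V. E v w}" by blast
      hence "deg (V-{i}) E v = deg V E v" using d1 d2 by simp
      thus ?thesis using False by simp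
    qed
  qed
  have "{v \<in> V - {i}. deg (V-{i}) E v = t} = {v\<in>V-{i}. (deg V E v = t \<and> \<not> E v i) \<or> (deg V E v = Suc t \<and> E v i)}"
    using key by blast
  thus ?thesis unfolding dcount_def delete_vertex_def by simp
qed

lemma total_sum:
  assumes fin: "finite V" and irr: "\<forall>u\<in>V. \<not> E u u"
  shows "(\<Sum>i\<in>V. dcount (delete_vertex V i) E t) =
     (card V - 1 - t) * dcount V E t + Suc t * dcount V E (Suc t)"
proof -
  define P where "P v i = ((deg V E v = t \<and> \<not> E v i) \<or> (deg V E v = Suc t \<and> E v i))" for v i
  have "(\<Sum>i\<in>V. dcount (delete_vertex V i) E t) = (\<Sum>i\<in>V. \<Sum>v\<in>V. if v \<noteq> i \<and> P v i then 1 else (0::nat))"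
  proof (rule sum.cong[OF refl])
    fix i assume i: "i \<in> V"
    have "dcount (delete_vertex V i) E t = card {v\<in>V. v \<noteq> i \<and> P v i}"
      unfolding dcount_del[OF fin i] P_def by (intro arg_cong[where f=card]) auto
    thus "dcount (delete_vertex V i) E t = (\<Sum>v\<in>V. if v \<noteq> i \<and> P v i then 1 else (0::nat))"
      using fin by (simp add: card_filter_sum)
  qed
  also have "\<dots> = (\<Sum>v\<in>V. \<Sum>i\<in>V. if v \<noteq> i \<and> P v i then 1 else (0::nat))"
    by (rule sum.swap)
  also have "\<dots> = (\<Sum>v\<in>V. (if deg V E v = t then card V - 1 - t else 0) + (if deg V E v = Suc t then Suc t else 0))"
  proof (rule sum.cong[OF refl])
    fix v assume v: "v \<in> V"
    have s1: "(\<Sum>i\<in>V. if v \<noteq> i \<and> P v i then 1 else (0::nat)) = card {i\<in>V. v \<noteq> i \<and> P v i}"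
      using fin by (simp add: card_filter_sum)
    have sub: "{w\<in>V. E v w} \<subseteq> V - {v}" using irr v by auto
    have cV: "card (V - {v}) = card V - 1" using fin v by simp
    show "(\<Sum>i\<in>V. if v \<noteq> i \<and> P v i then 1 else (0::nat)) = (if deg V E v = t then card V - 1 - t else 0) + (if deg V E v = Suc t then Suc t else 0)"
    proof (cases "deg V E v = t")
      case True
      have "{i\<in>V. v \<noteq> i \<and> P v i} = (V - {v}) - {w\<in>V. E v w}" using True unfolding P_def by auto
      hence "card {i\<in>V. v \<noteq> i \<and> P v i} = card V - 1 - t"
        using card_Diff_subset[OF finite_subset[OF sub] sub] fin cV True unfolding deg_def by simp
      thus ?thesis using s1 True by simp
    next
      case F: False
      show ?thesis
      proof (cases "deg V E v = Suc t")
        case True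
        have "{i\<in>V. v \<noteq> i \<and> P v i} = {w\<in>V. E v w}" using True irr v unfolding P_def by auto
        thus ?thesis using s1 True unfolding deg_def by simp
      next
        case False
        have "{i\<in>V. v \<noteq> i \<and> P v i} = {}" using False F unfolding P_def by auto
        hence "card {i\<in>V. v \<noteq> i \<and> P v i} = 0" by (simp only: card.empty)
        thus ?thesis using s1 False F by simp
      qed
    qed
  qed
  also have "\<dots> = (card V - 1 - t) * dcount V E t + Suc t * dcount V E (Suc t)"
    unfolding sum.distrib dcount_def using fin
    by (simp add: sum.inter_filter[symmetric])
  finally show ?thesis .
qed

lemma dcount_del_le:
  assumes "finite V" "i \<in> V"
  shows "dcount (delete_vertex V i) E t \<le> dcount V E t + dcount V E (Suc t)"
proof -
  have "dcount (delete_vertex V i) E t \<le> card ({v\<in>V. deg V E v = t} \<union> {v\<in>V. deg V E v = Suc t})"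
    unfolding dcount_del[OF assms] using assms by (intro card_mono) auto
  also have "\<dots> \<le> dcount V E t + dcount V E (Suc t)" unfolding dcount_def by (rule card_Un_le)
  finally show ?thesis .
qed

theorem mainTheorem7:
  shows "\<exists>N::nat. \<forall>n\<ge>N. \<forall>(E :: nat \<Rightarrow> nat \<Rightarrow> bool) (k::nat) (t::nat).
    simple_graph_on {1..n} E \<longrightarrow>
    real k \<le> sqrt (real n) / 20 \<longrightarrow>
    real t \<le> 2 * real n / 3 - 1 \<longrightarrow>
    real (dcount {1..n} E (t + 1)) \<le> sqrt (real n) \<longrightarrow>
    (let s = (\<Sum>i = 1..n - k. dcount (delete_vertex {1..n} i) E t);
         d = real (dcount {1..n} E t);
         d' = (real s - real (t + 1) * real (dcount {1..n} E (t + 1))) / (real n - 1 - real t)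
     in d \<ge> d' \<and>
        (d \<le> 2 * sqrt (real n) \<longrightarrow> d - d' < 1 / 2) \<and>
        (d > 2 * sqrt (real n) \<longrightarrow> d' \<ge> d / 2 \<and> d / 2 > sqrt (real n)))"
proof (intro exI[of _ 0] allI impI)
  fix n :: nat and E k t
  assume sg: "simple_graph_on {1..n} E" and hk: "real k \<le> sqrt (real n) / 20"
    and ht: "real t \<le> 2 * real n / 3 - 1" and hd1: "real (dcount {1..n} E (t + 1)) \<le> sqrt (real n)"
  define V where "V = {1..n}"
  define dt where "dt = dcount V E t"
  define d1 where "d1 = dcount V E (Suc t)"
  define c where "c i = dcount (delete_vertex V i) E t" for i
  define s where "s = (\<Sum>i = 1..n - k. c i)"
  define r where "r = (\<Sum>i\<in>V - {1..n-k}. c i)"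
  have n2: "n \<ge> 2" using ht by linarith
  have tn: "t \<le> n - 1" using ht by linarith
  have fin: "finite V" unfolding V_def by simp
  have irr: "\<forall>u\<in>V. \<not> E u u" using sg unfolding simple_graph_on_def V_def by blast
  have cardV: "card V = n" unfolding V_def by simp
  have S: "(\<Sum>i\<in>V. c i) = (n - 1 - t) * dt + Suc t * d1"
    using total_sum[of V E t, OF fin irr] cardV unfolding c_def dt_def d1_def by simp
  have sub: "{1..n-k} \<subseteq> V" unfolding V_def by auto
  have split: "(\<Sum>i\<in>V. c i) = r + s" unfolding r_def s_def
    using sum.subset_diff[OF sub fin] by simp
  have kn: "k \<le> n"
  proof -
    have "real n \<le> (real n)\<^sup>2" using n2 by (simp add: power2_eq_square)
    hence "sqrt (real n) \<le> real n" by (intro real_le_lsqrt) auto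
    hence "real k \<le> real n" using hk by linarith
    thus ?thesis by simp
  qed
  have cardD: "card (V - {1..n-k}) = k"
    using card_Diff_subset[OF _ sub] kn unfolding V_def by simp
  have "\<forall>i\<in>V - {1..n-k}. c i \<le> dt + d1"
    using dcount_del_le[OF fin] unfolding c_def dt_def d1_def by auto
  hence "r \<le> card (V - {1..n-k}) * (dt + d1)" unfolding r_def
    using sum_bounded_above[of "V - {1..n-k}" c "dt + d1"] by simp
  hence "r \<le> k * (dt + d1)" using cardD by simp
  hence "real r \<le> real (k * (dt + d1))" by (simp only: of_nat_le_iff)
  hence rle: "real r \<le> real k * (real dt + real d1)" by simp
  define x where "x = sqrt (real n)"
  have x0: "x > 0" unfolding x_def using n2 by simp
  have xx: "x * x = real n" unfolding x_def by simp
  have x1: "x \<ge> 1" unfolding x_def using n2 by simp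
  define D where "D = real n - 1 - real t"
  have D3: "D \<ge> real n / 3" unfolding D_def using ht by linarith
  have Dp: "D > 0" using D3 n2 by simp
  have Dnat: "real (n - 1 - t) = D" unfolding D_def using tn n2 by (simp add: of_nat_diff)
  have "r + s = (n - 1 - t) * dt + Suc t * d1" using S split by simp
  hence "real (r + s) = real ((n - 1 - t) * dt + Suc t * d1)" by (rule arg_cong)
  hence "real r + real s = real (n - 1 - t) * real dt + real (Suc t) * real d1"
    by (simp only: of_nat_add of_nat_mult)
  hence sreal: "real s = D * real dt + real (t+1) * real d1 - real r"
    using Dnat by simp
  have d'eq: "(real s - real (t + 1) * real d1) / D = real dt - real r / D"
    using Dp sreal by (simp add: field_simps)
  have r0: "real r / D \<ge> 0" using Dp by simp
  have kx: "real k \<le> x / 20" using hk unfolding x_def by simp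
  have d1x: "real d1 \<le> x" using hd1 unfolding x_def d1_def V_def by simp
  have part2: "real dt \<le> 2 * x \<Longrightarrow> real r / D < 1/2"
  proof -
    assume h: "real dt \<le> 2 * x"
    have "real k * (real dt + real d1) \<le> (x/20) * (3 * x)"
      by (rule mult_mono) (use kx h d1x x0 in auto)
    hence "real r \<le> (x/20) * (3 * x)" using rle by linarith
    also have "\<dots> = 3 * real n / 20" using xx by simp
    finally have "real r \<le> 3 * real n / 20" .
    hence "real r \<le> 9/20 * D" using D3 by linarith
    hence "real r / D \<le> 9/20" by (simp add: pos_divide_le_eq[OF Dp])
    thus ?thesis by linarith
  qed
  have part3: "real dt > 2 * x \<Longrightarrow> real r / D \<le> real dt / 2"
  proof -
    assume h: "real dt > 2 * x"
    have "real dt + real d1 \<le> 3/2 * real dt" using h d1x by simp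
    hence "real k * (real dt + real d1) \<le> (x/20) * (3/2 * real dt)"
      by (intro mult_mono) (use kx x0 in auto)
    hence "real r \<le> (x/20) * (3/2 * real dt)" using rle by linarith
    also have "\<dots> \<le> (x * x / 20) * (3/2 * real dt) "
    proof (rule mult_right_mono)
      have "1 * x \<le> x * x" using mult_right_mono[of 1 x x] x1 x0 by simp
      thus "x / 20 \<le> x * x / 20" by simp
    qed simp
    also have "\<dots> = 3 * real n / 40 * real dt" using xx by simp
    also have "\<dots> \<le> 9/40 * D * real dt" using D3 by (intro mult_right_mono) auto
    finally have "real r \<le> 9/40 * D * real dt" .
    moreover have "0 \<le> D * real dt" using Dp by simp
    moreover have "real dt / 2 * D = 1/2 * (D * real dt)" by simp
    moreover have "9/40 * D * real dt = 9/40 * (D * real dt)" by simp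
    ultimately have "real r \<le> real dt / 2 * D" by linarith
    thus ?thesis by (simp add: pos_divide_le_eq[OF Dp])
  qed
  have e1: "(\<Sum>i = 1..n - k. dcount (delete_vertex {1..n} i) E t) = s"
    unfolding s_def c_def V_def by simp
  have e2: "dcount {1..n} E t = dt" unfolding dt_def V_def by simp
  have e3: "dcount {1..n} E (t + 1) = d1" unfolding d1_def V_def by simp
  have e4: "real n - 1 - real t = D" unfolding D_def by simp
  have e5: "sqrt (real n) = x" unfolding x_def by simp
  have h2: "real dt > 2 * x \<Longrightarrow> real dt / 2 > x" by simp
  show "let s = (\<Sum>i = 1..n - k. dcount (delete_vertex {1..n} i) E t);
         d = real (dcount {1..n} E t);
         d' = (real s - real (t + 1) * real (dcount {1..n} E (t + 1))) / (real n - 1 - real t)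
     in d \<ge> d' \<and>
        (d \<le> 2 * sqrt (real n) \<longrightarrow> d - d' < 1 / 2) \<and>
        (d > 2 * sqrt (real n) \<longrightarrow> d' \<ge> d / 2 \<and> d / 2 > sqrt (real n))"
    unfolding Let_def e1 e2 e3 e4 e5 d'eq
    using r0 part2 part3 h2 by simp
qed

end
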